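(* Let $k\in\{0,1,-1\}$ and consider the system for real functions $\hat H=(H_1,H_2,H_3)^T$, $\hat h=(h_1,h_2,h_3)^T$: $$\frac{d\hat H}{dt}=\hat H\times\hat\Omega+\hat h\times\hat a,\qquad \frac{d\hat h}{dt}=\hat h\times\hat\Omega+k\,(\hat H\times\hat a),$$ with $\hat a=(1,0,0)^T$ and $\hat\Omega=(H_1/2,H_2/2,H_3)^T$. Along a solution put $x=\tfrac12(H_1+iH_2)$, $y=h_1+ih_2$, $x_3=H_3$, $y_3=h_3$, and $q=x^2-(y-k)$. Let $H=x\bar x+\tfrac12x_3^2+\operatorname{Re}y$, $K_2=|y|^2+y_3^2+k(4|x|^2+x_3^2)$, $K_3=2\operatorname{Re}(x\bar y)+x_3y_3$, $K_4^2=|q|^2$ (all constant along the solution), let $\tilde K_2=K_2-k(2H-2k)-k^2-K_4^2$ and $P(X)=\tilde K_2-2K_3X+2HX^2-X^4$. Then along the solution $$-4\Big(\frac{dx}{dt}\Big)^2=P(x(t))+q(t)\big(x(t)-\overline{x(t)}\big)^2.$$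
   Context: $\times$ denotes the vector product in $\mathbb{R}^3$; the bar denotes complex conjugation. The quantities $H,K_2,K_3,K_4^2$ are integrals of motion of the system (Hamiltonian, the two Casimirs $\|\hat h\|^2+k\|\hat H\|^2$ and $\hat h\cdot\hat H$, and the Kowalewski-type integral). *)

theory Defs
  imports "HOL-Analysis.Analysis" "HOL-Analysis.Cross3"
begin

definition avec :: "real^3" where "avec = vector [1, 0, 0]"

definition Omega :: "real^3 \<Rightarrow> real^3" where
  "Omega Hv = vector [Hv$1 / 2, Hv$2 / 2, Hv$3]"

definition xfun :: "(real \<Rightarrow> real^3) \<Rightarrow> real \<Rightarrow> complex" where
  "xfun Hf t = Complex ((Hf t)$1 / 2) ((Hf t)$2 / 2)"

definition yfun :: "(real \<Rightarrow> real^3) \<Rightarrow> real \<Rightarrow> complex" where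
  "yfun hf t = Complex ((hf t)$1) ((hf t)$2)"

definition qval :: "real \<Rightarrow> complex \<Rightarrow> complex \<Rightarrow> complex" where
  "qval k x y = x^2 - (y - of_real k)"

definition Hint :: "complex \<Rightarrow> real \<Rightarrow> complex \<Rightarrow> real" where
  "Hint x x3 y = Re (x * cnj x) + x3^2 / 2 + Re y"

definition K2 :: "real \<Rightarrow> complex \<Rightarrow> real \<Rightarrow> complex \<Rightarrow> real \<Rightarrow> real" where
  "K2 k x x3 y y3 = (cmod y)^2 + y3^2 + k * (4 * (cmod x)^2 + x3^2)"

definition K3 :: "complex \<Rightarrow> real \<Rightarrow> complex \<Rightarrow> real \<Rightarrow> real" where
  "K3 x x3 y y3 = 2 * Re (x * cnj y) + x3 * y3"

definition K4sq :: "real \<Rightarrow> complex \<Rightarrow> complex \<Rightarrow> real" where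
  "K4sq k x y = (cmod (qval k x y))^2"

definition K2tilde :: "real \<Rightarrow> complex \<Rightarrow> real \<Rightarrow> complex \<Rightarrow> real \<Rightarrow> real" where
  "K2tilde k x x3 y y3 = K2 k x x3 y y3 - k * (2 * Hint x x3 y - 2 * k) - k^2 - K4sq k x y"

definition Ppoly :: "real \<Rightarrow> real \<Rightarrow> real \<Rightarrow> complex \<Rightarrow> complex" where
  "Ppoly Kt K3v Hv X = of_real Kt - 2 * of_real K3v * X + 2 * of_real Hv * X^2 - X^4"

end

theory Submission
  imports Defs
begin

lemma xfun_deriv:
  assumes "(Hf has_vector_derivative D) (at s)"
  shows "(xfun Hf has_vector_derivative Complex (D$1/2) (D$2/2)) (at s)"
proof -
  let ?L = "\<lambda>v::real^3. Complex (v$1/2) (v$2/2)"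
  have bl: "bounded_linear ?L"
  proof -
    have e: "?L = (\<lambda>v. (v$1/2) *\<^sub>R (1::complex) + (v$2/2) *\<^sub>R \<i>)"
      by (rule ext) (simp add: complex_eq_iff)
    show ?thesis
    proof -
      have c: "bounded_linear (\<lambda>v::real^3. v$i/2)" for i
        using bounded_linear_compose[OF bounded_linear_divide[of 2] bounded_linear_vec_nth[of i]] by simp
      have d: "bounded_linear (\<lambda>v::real^3. (v$i/2) *\<^sub>R (c::complex))" for i c
        using bounded_linear_compose[OF bounded_linear_scaleR_left[of c] c[of i]] by simp
      show ?thesis by (subst e) (intro bounded_linear_add d)
    qed
  qed
  have "((\<lambda>s. ?L (Hf s)) has_vector_derivative ?L D) (at s)"
    by (rule bounded_linear.has_vector_derivative[OF bl assms])
  moreover have "(\<lambda>s. ?L (Hf s)) = xfun Hf" by (rule ext) (simp add: xfun_def)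
  ultimately show ?thesis by simp
qed

theorem theorem2:
  fixes k :: real and Hf hf :: "real \<Rightarrow> real^3" and I :: "real set" and t :: real
  assumes "k \<in> {0, 1, -1}"
    and "open I"
    and "\<And>s. s \<in> I \<Longrightarrow>
           (Hf has_vector_derivative (cross3 (Hf s) (Omega (Hf s)) + cross3 (hf s) avec)) (at s)"
    and "\<And>s. s \<in> I \<Longrightarrow>
           (hf has_vector_derivative (cross3 (hf s) (Omega (Hf s)) + k *\<^sub>R cross3 (Hf s) avec)) (at s)"
    and "t \<in> I"
  shows "let x = xfun Hf t; y = yfun hf t; x3 = (Hf t)$3; y3 = (hf t)$3;
             q = qval k x y
         in - 4 * (vector_derivative (xfun Hf) (at t))^2
            = Ppoly (K2tilde k x x3 y y3) (K3 x x3 y y3) (Hint x x3 y) x + q * (x - cnj x)^2"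
proof -
  let ?D = "cross3 (Hf t) (Omega (Hf t)) + cross3 (hf t) avec"
  have "(xfun Hf has_vector_derivative Complex (?D$1/2) (?D$2/2)) (at t)"
    using xfun_deriv assms(3)[OF assms(5)] by blast
  hence vd: "vector_derivative (xfun Hf) (at t) = Complex (?D$1/2) (?D$2/2)"
    by (rule vector_derivative_at)
  obtain H1 H2 H3 where HH: "Hf t $ 1 = H1" "Hf t $ 2 = H2" "Hf t $ 3 = H3" by blast
  obtain h1 h2 h3 where hh: "hf t $ 1 = h1" "hf t $ 2 = h2" "hf t $ 3 = h3" by blast
  have D1: "?D$1 = H2*H3/2" and D2: "?D$2 = -H1*H3/2 + h3"
    by (simp_all add: cross3_simps Omega_def avec_def HH hh)
  show ?thesis
    unfolding Let_def vd D1 D2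
    apply (simp add: complex_eq_iff xfun_def yfun_def HH hh Ppoly_def K2tilde_def K2_def K3_def
          Hint_def K4sq_def qval_def cmod_def eval_nat_numeral)
    apply (simp add: field_simps power2_eq_square)
    done
qed

end
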